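(* Let $n\ge 1$, $B\in\{1,\dots,n\}$ and $p\in(\tfrac12,1)$, and consider the crowdfunding game $\Gamma(B,n)$ described in the context. Then $\Gamma(B,n)$ has a \emph{unique} symmetric non-trivial Bayes-Nash equilibrium $\sigma=(\sigma_1,\dots,\sigma_n)$. Moreover, there is $\lambda=\lambda(B,n)\in[0,1)$ such that for every player $i$, $\sigma_i(H)=1$ and $\sigma_i(L)=\lambda$.
   Context: The crowdfunding game $\Gamma(B,n)$ with parameter $p\in(\tfrac12,1)$: there are $n$ players $N=\{1,\dots,n\}$ and a threshold $B\in\{1,\dots,n\}$. A state of nature $\omega\in\Omega=\{H,L\}$ is drawn with $\Pr(\omega=H)=\Pr(\omega=L)=\tfrac12$. Conditional on $\omega$, each player $i$ independently receives a private signal $s_i\in\{H,L\}$ with $\Pr(s_i=\omega\mid\omega)=p$. Each player chooses an action $a_i\in\{0,1\}$ (1 = commit to buy, 0 = opt out), simultaneously. Payoffs: $u_i(a,\omega)=1$ if $a_i=1$, $\sum_{j\in N}a_j\ge B$ and $\omega=H$; $u_i(a,\omega)=-1$ if $a_i=1$, $\sum_{j\in N}a_j\ge B$ and $\omega=L$; and $u_i=0$ otherwise. A strategy of player $i$ is a map $\sigma_i:\{H,L\}\to[0,1]$, where $\sigma_i(s)$ is the probability that $i$ plays action $1$ after signal $s$. A Bayes-Nash equilibrium is a profile $\sigma$ such that no player $i$ can increase her expected utility by replacing $\sigma_i$ with any other map $f:\{H,L\}\to\{0,1\}$. A profile $\sigma$ is non-trivial if $\Pr_\sigma(\sum_{i}a_i\ge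 B)>0$, and symmetric if $\sigma_i=\sigma_j$ for all players $i,j$. *)

theory Defs
  imports Complex_Main "HOL-Library.FuncSet"
begin

text \<open>States of nature and signals: H or L. Players are 1..n.
  A strategy profile is sigma :: nat => st => real, sigma i s = probability
  that player i plays action 1 (commit) after signal s.\<close>

datatype st = H | L

definition signal_profiles :: "nat \<Rightarrow> (nat \<Rightarrow> st) set" where
  "signal_profiles n = PiE {1..n} (\<lambda>_. {H, L})"

definition action_profiles :: "nat \<Rightarrow> (nat \<Rightarrow> bool) set" where
  "action_profiles n = PiE {1..n} (\<lambda>_. (UNIV :: bool set))"

definition sig_prob :: "real \<Rightarrow> nat \<Rightarrow> st \<Rightarrow> (nat \<Rightarrow> st) \<Rightarrow> real" where
  "sig_prob p n \<omega> s = (\<Prod>i\<in>{1..n}. if s i = \<omega> then p else 1 - p)"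

text \<open>Probability of an action profile (True = action 1) given the signal profile.\<close>
definition act_prob :: "nat \<Rightarrow> (nat \<Rightarrow> st \<Rightarrow> real) \<Rightarrow> (nat \<Rightarrow> st) \<Rightarrow> (nat \<Rightarrow> bool) \<Rightarrow> real" where
  "act_prob n \<sigma> s a = (\<Prod>i\<in>{1..n}. if a i then \<sigma> i (s i) else 1 - \<sigma> i (s i))"

definition funded :: "nat \<Rightarrow> nat \<Rightarrow> (nat \<Rightarrow> bool) \<Rightarrow> bool" where
  "funded B n a \<longleftrightarrow> B \<le> card {j\<in>{1..n}. a j}"

definition payoff :: "nat \<Rightarrow> nat \<Rightarrow> nat \<Rightarrow> (nat \<Rightarrow> bool) \<Rightarrow> st \<Rightarrow> real" where
  "payoff B n i a \<omega> = (if a i \<and> funded B n a then (if \<omega> = H then 1 else -1) else 0)"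

definition expected_utility ::
  "real \<Rightarrow> nat \<Rightarrow> nat \<Rightarrow> (nat \<Rightarrow> st \<Rightarrow> real) \<Rightarrow> nat \<Rightarrow> real" where
  "expected_utility p B n \<sigma> i =
     (\<Sum>\<omega>\<in>{H, L}. (1/2) * (\<Sum>s\<in>signal_profiles n. sig_prob p n \<omega> s *
        (\<Sum>a\<in>action_profiles n. act_prob n \<sigma> s a * payoff B n i a \<omega>)))"

definition success_prob :: "real \<Rightarrow> nat \<Rightarrow> nat \<Rightarrow> (nat \<Rightarrow> st \<Rightarrow> real) \<Rightarrow> real" where
  "success_prob p B n \<sigma> =
     (\<Sum>\<omega>\<in>{H, L}. (1/2) * (\<Sum>s\<in>signal_profiles n. sig_prob p n \<omega> s *
        (\<Sum>a\<in>action_profiles n. act_prob n \<sigma> s a * (if funded B n a then 1 else 0))))"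

definition strategy_profile :: "nat \<Rightarrow> (nat \<Rightarrow> st \<Rightarrow> real) \<Rightarrow> bool" where
  "strategy_profile n \<sigma> \<longleftrightarrow> (\<forall>i\<in>{1..n}. \<forall>s. 0 \<le> \<sigma> i s \<and> \<sigma> i s \<le> 1)"

definition pure_strategy :: "(st \<Rightarrow> bool) \<Rightarrow> st \<Rightarrow> real" where
  "pure_strategy f = (\<lambda>s. if f s then 1 else 0)"

definition bayes_nash_eq :: "real \<Rightarrow> nat \<Rightarrow> nat \<Rightarrow> (nat \<Rightarrow> st \<Rightarrow> real) \<Rightarrow> bool" where
  "bayes_nash_eq p B n \<sigma> \<longleftrightarrow> strategy_profile n \<sigma> \<and>
     (\<forall>i\<in>{1..n}. \<forall>f. expected_utility p B n (\<sigma>(i := pure_strategy f)) i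
                        \<le> expected_utility p B n \<sigma> i)"

definition nontrivial :: "real \<Rightarrow> nat \<Rightarrow> nat \<Rightarrow> (nat \<Rightarrow> st \<Rightarrow> real) \<Rightarrow> bool" where
  "nontrivial p B n \<sigma> \<longleftrightarrow> success_prob p B n \<sigma> > 0"

definition symmetric_profile :: "nat \<Rightarrow> (nat \<Rightarrow> st \<Rightarrow> real) \<Rightarrow> bool" where
  "symmetric_profile n \<sigma> \<longleftrightarrow> (\<forall>i\<in>{1..n}. \<forall>j\<in>{1..n}. \<sigma> i = \<sigma> j)"

end

theory Submission
  imports Defs
begin

definition Gf :: "nat \<Rightarrow> nat \<Rightarrow> real \<Rightarrow> real" where
  "Gf m j x = (\<Sum>i\<le>j. real (m choose i) * x^i * (1-x)^(m-i))"

lemma Gf_Suc: "Gf m (Suc j) x = Gf m j x + real (m choose Suc j) * x^(Suc j) * (1-x)^(m - Suc j)"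
  by (simp add: Gf_def)

lemma aux_ident:
  fixes c1 c2 c3 sj mj m A C x :: real
  assumes "sj * c1 = m * c2" "mj * c1 = m * c3"
  shows "(- (m * c2) * A * ((1-x) * C)) + c1 * (sj * A * ((1-x) * C) + - (mj * C) * (x * A))
     = - (m * c3) * (x * A) * C"
proof -
  have "(- (m * c2) * A * ((1-x) * C)) + c1 * (sj * A * ((1-x) * C) + - (mj * C) * (x * A))
     = (sj*c1 - m*c2)*(A*(1-x)*C) - (mj*c1)*(x*A*C)" by (simp add: algebra_simps)
  also have "\<dots> = - (m * c3) * (x * A) * C" using assms by simp
  finally show ?thesis .
qed

lemma DERIV_1m_pow: "((\<lambda>x::real. (1-x)^n) has_real_derivative - (real n * (1-x)^(n - Suc 0))) (at x)"
  using DERIV_power[OF DERIV_diff[OF DERIV_const[of 1] DERIV_ident], of n x UNIV] by simp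

lemma Gf_deriv:
  assumes "j < Suc M"
  shows "(Gf (Suc M) j has_real_derivative
          (- (real (Suc M) * real (M choose j)) * x^j * (1-x)^(M-j))) (at x)"
  using assms
proof (induction j)
  case 0
  have "Gf (Suc M) 0 = (\<lambda>x. (1-x)^(Suc M))" by (auto simp: Gf_def fun_eq_iff)
  moreover have "((\<lambda>x. (1-x)^(Suc M)) has_real_derivative
     (- (real (Suc M) * real (M choose 0)) * x^0 * (1-x)^(M-0))) (at x)"
    using DERIV_1m_pow[of "Suc M" x] by (simp add: algebra_simps)
  ultimately show ?case by simp
next
  case (Suc j)
  hence jM: "Suc j \<le> M" by simp
  have IH: "(Gf (Suc M) j has_real_derivative
          (- (real (Suc M) * real (M choose j)) * x^j * (1-x)^(M-j))) (at x)"
    using Suc by simp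
  have d1: "((\<lambda>x. x^(Suc j)) has_real_derivative real (Suc j) * x^j) (at x)"
    using DERIV_pow[of "Suc j" x] by simp
  have d2: "((\<lambda>x. (1-x)^(M-j)) has_real_derivative - (real (M-j) * (1-x)^(M - Suc j))) (at x)"
    using DERIV_1m_pow[of "M-j" x] unfolding diff_diff_left by simp
  have T: "((\<lambda>x. real (Suc M choose Suc j) * (x^(Suc j) * (1-x)^(M - j))) has_real_derivative
      real (Suc M choose Suc j) * (real (Suc j) * x^j * (1-x)^(M-j)
        + - (real (M - j) * (1-x)^(M - Suc j)) * x^(Suc j))) (at x)"
    by (rule DERIV_cmult[OF DERIV_mult[OF d1 d2]])
  have D: "(Gf (Suc M) (Suc j) has_real_derivative
      (- (real (Suc M) * real (M choose j)) * x^j * (1-x)^(M-j)) +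
      real (Suc M choose Suc j) * (real (Suc j) * x^j * (1-x)^(M-j)
        + - (real (M - j) * (1-x)^(M - Suc j)) * x^(Suc j))) (at x)"
  proof -
    have "Gf (Suc M) (Suc j) = (\<lambda>x. Gf (Suc M) j x + real (Suc M choose Suc j) * (x^(Suc j) * (1-x)^(M - j)))"
      by (simp add: Gf_Suc fun_eq_iff mult.assoc)
    thus ?thesis using DERIV_add[OF IH T] by simp
  qed
  have e1: "real (Suc j) * real (Suc M choose Suc j) = real (Suc M) * real (M choose j)"
    by (metis of_nat_mult Suc_times_binomial)
  have e2: "real (M - j) * real (Suc M choose Suc j) = real (Suc M) * real (M choose Suc j)"
    using binomial_absorb_comp[of "Suc M" "Suc j"] by (metis diff_Suc_Suc diff_Suc_1 of_nat_mult)
  have "M - j = Suc (M - Suc j)" using jM by (simp add: Suc_diff_Suc)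
  hence pw: "(1-x)^(M-j) = (1-x) * (1-x)^(M - Suc j)" by (simp only: power_Suc)
  have px: "x^(Suc j) = x * x^j" by (simp only: power_Suc)
  show ?case
    using D unfolding pw px aux_ident[OF e1 e2] by (simp only: mult.assoc)
qed

lemma Gf_zero: "Gf m j 0 = 1"
  by (induction j) (simp_all add: Gf_def)

lemma Gf_full: "Gf m m x = 1"
  using binomial_ring[of x "1-x" m] by (simp add: Gf_def)

lemma Gf_nonneg: "0 \<le> x \<Longrightarrow> x \<le> 1 \<Longrightarrow> 0 \<le> Gf m j x"
  unfolding Gf_def by (intro sum_nonneg) auto

lemma Gf_pos: assumes "0 \<le> x" "x < 1" shows "0 < Gf m j x"
proof -
  have "(\<lambda>i. real (m choose i) * x^i * (1-x)^(m-i)) 0 \<le> Gf m j x"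
    unfolding Gf_def using assms by (intro member_le_sum) auto
  moreover have "0 < (1-x)^m" using assms by simp
  ultimately show ?thesis by simp
qed

lemma Gf_mono:
  assumes "j \<le> m" "0 \<le> x" "x \<le> y" "y \<le> 1"
  shows "Gf m j y \<le> Gf m j x"
proof (cases "j = m")
  case True thus ?thesis by (simp add: Gf_full)
next
  case False
  then obtain M where m: "m = Suc M" and jM: "j < Suc M" using assms
    by (cases m) auto
  show ?thesis unfolding m
  proof (rule DERIV_nonpos_imp_nonincreasing[OF assms(3)])
    fix z assume z: "x \<le> z" "z \<le> y"
    show "\<exists>d. (Gf (Suc M) j has_real_derivative d) (at z) \<and> d \<le> 0"
    proof -
      have "0 \<le> real (Suc M) * real (M choose j) * z ^ j * (1 - z) ^ (M - j)" using z assms by simp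
      thus ?thesis using Gf_deriv[OF jM, of z]
        by (intro exI[of _ "- (real (Suc M) * real (M choose j)) * z ^ j * (1 - z) ^ (M - j)"]) auto
    qed
  qed
qed

lemma KI:
  assumes "j \<le> M" "0 < x" "x < y" "y < 1"
  shows "x^(Suc j) * (1-x)^(M-j) * Gf (Suc M) j y < y^(Suc j) * (1-y)^(M-j) * Gf (Suc M) j x"
proof -
  have "x^(Suc j) * (1-x)^(M-j) * Gf (Suc M) j y =
        (\<Sum>i\<le>j. x^(Suc j) * (1-x)^(M-j) * (real (Suc M choose i) * y^i * (1-y)^(Suc M-i)))"
    unfolding Gf_def by (simp add: sum_distrib_left)
  also have "\<dots> < (\<Sum>i\<le>j. y^(Suc j) * (1-y)^(M-j) * (real (Suc M choose i) * x^i * (1-x)^(Suc M-i)))"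
  proof (rule sum_strict_mono)
    fix i assume "i \<in> {..j}"
    hence i: "i \<le> j" by simp
    define d where "d = Suc j - i"
    have d: "0 < d" "Suc j = i + d" "Suc M - i = (M - j) + d" using i assms(1) by (auto simp: d_def)
    define K where "K = real (Suc M choose i) * x^i * y^i * (1-x)^(M-j) * (1-y)^(M-j)"
    have K: "0 < K" unfolding K_def using assms i by (intro mult_pos_pos) auto
    have "x * (1-y) < y * (1-x)" using assms by (simp add: algebra_simps)
    hence "(x * (1-y))^d < (y * (1-x))^d"
      using d assms by (intro power_strict_mono) auto
    hence lt: "K * (x * (1-y))^d < K * (y * (1-x))^d" using K by simp
    have L: "x^(Suc j) * (1-x)^(M-j) * (real (Suc M choose i) * y^i * (1-y)^(Suc M-i)) = K * (x * (1-y))^d"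
      unfolding K_def d(2) d(3) power_add power_mult_distrib by (simp add: algebra_simps)
    have R: "y^(Suc j) * (1-y)^(M-j) * (real (Suc M choose i) * x^i * (1-x)^(Suc M-i)) = K * (y * (1-x))^d"
      unfolding K_def d(2) d(3) power_add power_mult_distrib by (simp add: algebra_simps)
    show "x^(Suc j) * (1-x)^(M-j) * (real (Suc M choose i) * y^i * (1-y)^(Suc M-i))
        < y^(Suc j) * (1-y)^(M-j) * (real (Suc M choose i) * x^i * (1-x)^(Suc M-i))"
      using L R lt by simp
  qed auto
  also have "\<dots> = y^(Suc j) * (1-y)^(M-j) * Gf (Suc M) j x"
    unfolding Gf_def by (simp add: sum_distrib_left)
  finally show ?thesis .
qed

lemma ratio_mono:
  assumes jM: "j \<le> M" and ab: "0 < a" "a < b" "b < 1" and t: "0 < t1" "t1 < t2" "t2 \<le> 1"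
  shows "Gf (Suc M) j (a*t1) / Gf (Suc M) j (b*t1) < Gf (Suc M) j (a*t2) / Gf (Suc M) j (b*t2)"
proof (rule DERIV_pos_imp_increasing[OF t(2)])
  fix t assume tt: "t1 \<le> t" "t \<le> t2"
  define G where "G = Gf (Suc M) j"
  define c where "c = real (Suc M) * real (M choose j)"
  have c: "0 < c" unfolding c_def using jM by simp
  have j: "j < Suc M" using jM by simp
  have t0: "0 < t" "t \<le> 1" using tt t by auto
  have x: "0 < a*t" "a*t < b*t" "b*t < 1" using ab t0
    by (auto intro: mult_pos_pos mult_strict_right_mono order.strict_trans1[OF mult_right_le_one_le])
  have dA: "((\<lambda>t. G (a*t)) has_real_derivative (- c * (a*t)^j * (1-a*t)^(M-j)) * (a*1)) (at t)"
    unfolding G_def c_def by (rule DERIV_chain'[OF DERIV_cmult[OF DERIV_ident] Gf_deriv[OF j]])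
  have dB: "((\<lambda>t. G (b*t)) has_real_derivative (- c * (b*t)^j * (1-b*t)^(M-j)) * (b*1)) (at t)"
    unfolding G_def c_def by (rule DERIV_chain'[OF DERIV_cmult[OF DERIV_ident] Gf_deriv[OF j]])
  have GB: "0 < G (b*t)" unfolding G_def using x by (intro Gf_pos) auto
  define Num where "Num = (- c * (a*t)^j * (1-a*t)^(M-j)) * (a*1) * G (b*t)
        - G (a*t) * ((- c * (b*t)^j * (1-b*t)^(M-j)) * (b*1))"
  have "t * Num = c * ((b*t)^(Suc j) * (1-b*t)^(M-j) * G (a*t) - (a*t)^(Suc j) * (1-a*t)^(M-j) * G (b*t))"
    unfolding Num_def power_Suc by (simp add: algebra_simps)
  moreover have "(a*t)^(Suc j) * (1-a*t)^(M-j) * G (b*t) < (b*t)^(Suc j) * (1-b*t)^(M-j) * G (a*t)"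
    unfolding G_def using KI[OF jM x] .
  ultimately have "0 < t * Num" using c by simp
  hence Np: "0 < Num" using t0 by (simp add: zero_less_mult_iff)
  have "((\<lambda>t. G (a*t) / G (b*t)) has_real_derivative Num / (G (b*t) * G (b*t))) (at t)"
    unfolding Num_def using GB by (intro DERIV_divide[OF dA dB]) auto
  moreover have "0 < Num / (G (b*t) * G (b*t))" using Np GB by simp
  ultimately show "\<exists>y. ((\<lambda>t. Gf (Suc M) j (a*t) / Gf (Suc M) j (b*t)) has_real_derivative y) (at t) \<and> 0 < y"
    unfolding G_def by blast
qed

definition wt :: "real \<Rightarrow> st \<Rightarrow> st \<Rightarrow> real" where
  "wt p \<omega> x = (if x = \<omega> then p else 1 - p)"

definition rr :: "real \<Rightarrow> (st \<Rightarrow> real) \<Rightarrow> st \<Rightarrow> real" where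
  "rr p \<tau> \<omega> = wt p \<omega> H * \<tau> H + wt p \<omega> L * \<tau> L"

lemma sum_HL: "(\<Sum>x\<in>{H, L}. f x) = f H + f L"
  by simp

lemma inner_gen:
  "(\<Sum>s\<in>signal_profiles n. sig_prob p n \<omega> s * (\<Sum>a\<in>action_profiles n. act_prob n \<sigma> s a * F a))
   = (\<Sum>a\<in>action_profiles n. F a * (\<Prod>j\<in>{1..n}. if a j then rr p (\<sigma> j) \<omega> else 1 - rr p (\<sigma> j) \<omega>))"
proof -
  define v where "v = (\<lambda>j x (b::bool). if b then \<sigma> j x else 1 - \<sigma> j x)"
  have "(\<Sum>s\<in>signal_profiles n. sig_prob p n \<omega> s * (\<Sum>a\<in>action_profiles n. act_prob n \<sigma> s a * F a))
      = (\<Sum>s\<in>signal_profiles n. \<Sum>a\<in>action_profiles n. F a * (\<Prod>j\<in>{1..n}. wt p \<omega> (s j) * v j (s j) (a j)))"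
    unfolding sig_prob_def act_prob_def v_def wt_def
    by (simp add: sum_distrib_left prod.distrib mult_ac)
  also have "\<dots> = (\<Sum>a\<in>action_profiles n. F a * (\<Sum>s\<in>signal_profiles n. \<Prod>j\<in>{1..n}. wt p \<omega> (s j) * v j (s j) (a j)))"
    by (subst sum.swap) (simp add: sum_distrib_left)
  also have "\<dots> = (\<Sum>a\<in>action_profiles n. F a * (\<Prod>j\<in>{1..n}. \<Sum>x\<in>{H,L}. wt p \<omega> x * v j x (a j)))"
    unfolding signal_profiles_def
  proof (intro sum.cong refl arg_cong2[where f="(*)"])
    fix a
    show "(\<Sum>s\<in>PiE {1..n} (\<lambda>_. {H,L}). \<Prod>j\<in>{1..n}. wt p \<omega> (s j) * v j (s j) (a j))
        = (\<Prod>j\<in>{1..n}. \<Sum>x\<in>{H,L}. wt p \<omega> x * v j x (a j))"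
      using prod_sum_PiE[of "{1..n}" "\<lambda>_. {H,L}" "\<lambda>j x. wt p \<omega> x * v j x (a j)"] by simp
  qed
  also have "\<dots> = (\<Sum>a\<in>action_profiles n. F a * (\<Prod>j\<in>{1..n}. if a j then rr p (\<sigma> j) \<omega> else 1 - rr p (\<sigma> j) \<omega>))"
    by (intro sum.cong refl arg_cong2[where f="(*)"] prod.cong)
       (cases \<omega>; auto simp: v_def wt_def rr_def algebra_simps)
  finally show ?thesis .
qed

lemma sum_PiE_bool:
  assumes "finite I"
  shows "(\<Sum>a\<in>PiE I (\<lambda>_. UNIV::bool set). g a) = (\<Sum>S\<in>Pow I. g (restrict (\<lambda>j. j \<in> S) I))"
proof -
  have r: "restrict (\<lambda>j. j \<in> {j\<in>I. a j}) I = a" if "a \<in> PiE I (\<lambda>_. UNIV::bool set)" for a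
    using that by (auto simp: PiE_def extensional_def restrict_def fun_eq_iff)
  show ?thesis
    by (rule sum.reindex_bij_witness[of _ "\<lambda>S. restrict (\<lambda>j. j \<in> S) I" "\<lambda>a. {j\<in>I. a j}"])
       (use r in \<open>auto simp: restrict_def\<close>)
qed

lemma card_pow_sum:
  assumes "finite I"
  shows "(\<Sum>S\<in>Pow I. (\<Prod>j\<in>I. if j \<in> S then q else 1 - q) * F (card S))
    = (\<Sum>l\<le>card I. real (card I choose l) * q^l * (1-q)^(card I - l) * F l)"
proof -
  define N where "N = card I"
  have "(\<Sum>S\<in>Pow I. (\<Prod>j\<in>I. if j \<in> S then q else 1 - q) * F (card S))
      = (\<Sum>S\<in>Pow I. q^(card S) * (1-q)^(N - card S) * F (card S))"
  proof (rule sum.cong[OF refl])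
    fix S assume S: "S \<in> Pow I"
    hence SI: "S \<subseteq> I" by simp
    have fS: "finite S" using S assms finite_subset by auto
    have "(\<Prod>j\<in>I. if j \<in> S then q else 1 - q) = (\<Prod>j\<in>I \<inter> {j. j\<in>S}. q) * (\<Prod>j\<in>I \<inter> - {j. j \<in> S}. 1 - q)"
      by (rule prod.If_cases[OF assms])
    also have "I \<inter> {j. j\<in>S} = S" using SI by auto
    also have "I \<inter> - {j. j \<in> S} = I - S" by auto
    finally have e: "(\<Prod>j\<in>I. if j \<in> S then q else 1 - q) = (\<Prod>j\<in>S. q) * (\<Prod>j\<in>I - S. 1 - q)" .
    have "card (I - S) = N - card S" unfolding N_def using SI fS by (simp add: card_Diff_subset)
    thus "(\<Prod>j\<in>I. if j \<in> S then q else 1 - q) * F (card S) = q^(card S) * (1-q)^(N - card S) * F (card S)"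
      using e by simp
  qed
  also have "\<dots> = (\<Sum>l\<le>N. \<Sum>S\<in>{S. S \<in> Pow I \<and> card S = l}. q^(card S) * (1-q)^(N - card S) * F (card S))"
    by (rule sum.group[symmetric]) (use assms in \<open>auto simp: N_def intro: card_mono\<close>)
  also have "\<dots> = (\<Sum>l\<le>N. real (N choose l) * q^l * (1-q)^(N - l) * F l)"
  proof (rule sum.cong[OF refl])
    fix l
    have "(\<Sum>S\<in>{S. S \<in> Pow I \<and> card S = l}. q^(card S) * (1-q)^(N - card S) * F (card S))
        = (\<Sum>S\<in>{S. S \<in> Pow I \<and> card S = l}. q^l * (1-q)^(N - l) * F l)"
      by (rule sum.cong) auto
    also have "\<dots> = real (card {S. S \<subseteq> I \<and> card S = l}) * (q^l * (1-q)^(N - l) * F l)"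
      by simp
    also have "card {S. S \<subseteq> I \<and> card S = l} = N choose l"
      unfolding N_def by (rule n_subsets[OF assms])
    finally show "(\<Sum>S\<in>{S. S \<in> Pow I \<and> card S = l}. q^(card S) * (1-q)^(N - card S) * F (card S))
        = real (N choose l) * q^l * (1-q)^(N - l) * F l" by (simp add: mult_ac)
  qed
  finally show ?thesis unfolding N_def .
qed

definition Pst :: "nat \<Rightarrow> nat \<Rightarrow> real \<Rightarrow> real" where
  "Pst B m q = (\<Sum>l\<le>m. real (m choose l) * q^l * (1-q)^(m-l) * (if B \<le> Suc l then 1 else 0))"

lemma pow_form:
  "(\<Sum>s\<in>signal_profiles n. sig_prob p n \<omega> s * (\<Sum>a\<in>action_profiles n. act_prob n \<sigma> s a * F a))
   = (\<Sum>S\<in>Pow {1..n}. F (restrict (\<lambda>j. j \<in> S) {1..n}) *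
        (\<Prod>j\<in>{1..n}. if j \<in> S then rr p (\<sigma> j) \<omega> else 1 - rr p (\<sigma> j) \<omega>))"
proof -
  have "(\<Sum>s\<in>signal_profiles n. sig_prob p n \<omega> s * (\<Sum>a\<in>action_profiles n. act_prob n \<sigma> s a * F a))
    = (\<Sum>S\<in>Pow {1..n}. F (restrict (\<lambda>j. j \<in> S) {1..n}) *
        (\<Prod>j\<in>{1..n}. if restrict (\<lambda>j. j \<in> S) {1..n} j then rr p (\<sigma> j) \<omega> else 1 - rr p (\<sigma> j) \<omega>))"
    unfolding inner_gen unfolding action_profiles_def by (rule sum_PiE_bool) simp
  also have "\<dots> = (\<Sum>S\<in>Pow {1..n}. F (restrict (\<lambda>j. j \<in> S) {1..n}) *
        (\<Prod>j\<in>{1..n}. if j \<in> S then rr p (\<sigma> j) \<omega> else 1 - rr p (\<sigma> j) \<omega>))"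
    by (intro sum.cong refl arg_cong2[where f="(*)"] prod.cong) auto
  finally show ?thesis .
qed

lemma card_restrict: "S \<subseteq> {1..n} \<Longrightarrow> card {j\<in>{1..n}. restrict (\<lambda>j. j \<in> S) {1..n} j} = card S"
proof -
  assume "S \<subseteq> {1..n}"
  hence "{j\<in>{1..n}. restrict (\<lambda>j. j \<in> S) {1..n} j} = S" by auto
  thus ?thesis by simp
qed

lemma eu_inner:
  assumes i: "i \<in> {1..n}" and oth: "\<forall>j\<in>{1..n}. j \<noteq> i \<longrightarrow> \<sigma> j = \<tau>"
  shows "(\<Sum>s\<in>signal_profiles n. sig_prob p n \<omega> s * (\<Sum>a\<in>action_profiles n. act_prob n \<sigma> s a * payoff B n i a \<omega>))
    = (if \<omega> = H then 1 else -1) * rr p (\<sigma> i) \<omega> * Pst B (n-1) (rr p \<tau> \<omega>)"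
proof -
  define u :: real where "u = (if \<omega> = H then 1 else -1)"
  define r where "r = (\<lambda>j. rr p (\<sigma> j) \<omega>)"
  define q where "q = rr p \<tau> \<omega>"
  define I where "I = {1..n::nat}"
  define J where "J = I - {i}"
  have IJ: "I = insert i J" and iJ: "i \<notin> J" and fJ: "finite J" using i by (auto simp: I_def J_def)
  have cJ: "card J = n - 1" using i by (simp add: J_def I_def)
  have rJ: "\<And>j. j \<in> J \<Longrightarrow> r j = q" using oth by (auto simp: r_def q_def J_def I_def)
  define h where "h = (\<lambda>S. (if i \<in> S \<and> B \<le> card S then u else 0) * (\<Prod>j\<in>I. if j \<in> S then r j else 1 - r j))"
  have "(\<Sum>s\<in>signal_profiles n. sig_prob p n \<omega> s * (\<Sum>a\<in>action_profiles n. act_prob n \<sigma> s a * payoff B n i a \<omega>))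
      = (\<Sum>S\<in>Pow I. h S)"
    unfolding pow_form h_def I_def r_def
  proof (intro sum.cong refl arg_cong2[where f="(*)"])
    fix S assume "S \<in> Pow {1..n}"
    hence S: "S \<subseteq> {1..n}" by simp
    show "payoff B n i (restrict (\<lambda>j. j \<in> S) {1..n}) \<omega> = (if i \<in> S \<and> B \<le> card S then u else 0)"
      unfolding payoff_def funded_def card_restrict[OF S] u_def using i by auto
  qed
  also have "\<dots> = (\<Sum>S\<in>Pow J. h S) + (\<Sum>S\<in>insert i ` Pow J. h S)"
    unfolding IJ Pow_insert using iJ fJ by (intro sum.union_disjoint) auto
  also have "(\<Sum>S\<in>Pow J. h S) = 0"
    using iJ by (intro sum.neutral) (auto simp: h_def)
  also have "(\<Sum>S\<in>insert i ` Pow J. h S) = (\<Sum>T\<in>Pow J. h (insert i T))"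
    using iJ by (intro sum.reindex[unfolded comp_def]) (auto simp: inj_on_def)
  also have "\<dots> = (\<Sum>T\<in>Pow J. u * r i * ((\<Prod>j\<in>J. if j \<in> T then q else 1 - q) * (if B \<le> Suc (card T) then 1 else 0)))"
  proof (rule sum.cong[OF refl])
    fix T assume "T \<in> Pow J"
    hence T: "T \<subseteq> J" by simp
    hence fT: "finite T" using fJ finite_subset by auto
    have ct: "card (insert i T) = Suc (card T)" using T iJ fT by (subst card_insert_disjoint) auto
    have "(\<Prod>j\<in>I. if j \<in> insert i T then r j else 1 - r j) = r i * (\<Prod>j\<in>J. if j \<in> insert i T then r j else 1 - r j)"
      unfolding IJ using iJ fJ by simp
    also have "(\<Prod>j\<in>J. if j \<in> insert i T then r j else 1 - r j) = (\<Prod>j\<in>J. if j \<in> T then q else 1 - q)"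
      using iJ rJ by (intro prod.cong) auto
    finally show "h (insert i T) = u * r i * ((\<Prod>j\<in>J. if j \<in> T then q else 1 - q) * (if B \<le> Suc (card T) then 1 else 0))"
      unfolding h_def ct by simp
  qed
  also have "\<dots> = u * r i * (\<Sum>T\<in>Pow J. (\<Prod>j\<in>J. if j \<in> T then q else 1 - q) * (if B \<le> Suc (card T) then 1 else 0))"
    by (simp add: sum_distrib_left)
  also have "(\<Sum>T\<in>Pow J. (\<Prod>j\<in>J. if j \<in> T then q else 1 - q) * (if B \<le> Suc (card T) then 1 else 0))
      = Pst B (n-1) q"
    unfolding Pst_def cJ[symmetric] by (rule card_pow_sum[OF fJ, where F="\<lambda>l. if B \<le> Suc l then 1 else 0"])
  finally show ?thesis by (simp add: u_def r_def q_def)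
qed

lemma EU_formula:
  assumes i: "i \<in> {1..n}" and oth: "\<forall>j\<in>{1..n}. j \<noteq> i \<longrightarrow> \<sigma> j = \<tau>"
  shows "expected_utility p B n \<sigma> i = 1/2 * (rr p (\<sigma> i) H * Pst B (n-1) (rr p \<tau> H)
      - rr p (\<sigma> i) L * Pst B (n-1) (rr p \<tau> L))"
  unfolding expected_utility_def sum_HL eu_inner[OF assms] by simp

lemma rr_H: "rr p \<tau> H = p * \<tau> H + (1-p) * \<tau> L" by (simp add: rr_def wt_def)
lemma rr_L: "rr p \<tau> L = (1-p) * \<tau> H + p * \<tau> L" by (simp add: rr_def wt_def)

lemma Pst_Gf:
  assumes "1 \<le> B" "B \<le> Suc m"
  shows "Pst B m q = Gf m (Suc m - B) (1-q)"
proof -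
  define k where "k = B - 1"
  have kB: "\<And>l. (B \<le> Suc l) = (k \<le> l)" using assms by (auto simp: k_def)
  define g where "g = (\<lambda>l. real (m choose l) * q^l * (1-q)^(m-l))"
  have "Pst B m q = (\<Sum>l\<le>m. if k \<le> l then g l else 0)"
    unfolding Pst_def g_def kB by (intro sum.cong) auto
  also have "\<dots> = (\<Sum>l\<in>{l\<in>{..m}. k \<le> l}. g l)"
    by (rule sum.inter_filter[symmetric]) simp
  also have "{l\<in>{..m}. k \<le> l} = {k..m}" by auto
  also have "(\<Sum>l\<in>{k..m}. g l) = (\<Sum>i\<le>m-k. g (m - i))"
    by (rule sum.reindex_bij_witness[of _ "\<lambda>l. m - l" "\<lambda>i. m - i"]) (use assms in \<open>auto simp: k_def\<close>)
  also have "\<dots> = Gf m (Suc m - B) (1-q)"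
    unfolding Gf_def
  proof (rule sum.cong)
    show "{..m - k} = {..Suc m - B}" using assms by (auto simp: k_def)
  next
    fix i assume "i \<in> {..Suc m - B}"
    hence i: "i \<le> m" using assms by auto
    show "g (m - i) = real (m choose i) * (1 - q) ^ i * (1 - (1 - q)) ^ (m - i)"
      unfolding g_def using i by (simp add: binomial_symmetric[OF i, symmetric] mult_ac)
  qed
  finally show ?thesis .
qed

lemma success_formula:
  assumes sym: "\<forall>j\<in>{1..n}. \<sigma> j = \<tau>"
  shows "success_prob p B n \<sigma> = 1/2 *
     ((\<Sum>l\<le>n. real (n choose l) * (rr p \<tau> H)^l * (1 - rr p \<tau> H)^(n-l) * (if B \<le> l then 1 else 0)) +
      (\<Sum>l\<le>n. real (n choose l) * (rr p \<tau> L)^l * (1 - rr p \<tau> L)^(n-l) * (if B \<le> l then 1 else 0)))"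
proof -
  have inner: "(\<Sum>s\<in>signal_profiles n. sig_prob p n \<omega> s * (\<Sum>a\<in>action_profiles n. act_prob n \<sigma> s a *
      (if funded B n a then 1 else 0)))
    = (\<Sum>l\<le>n. real (n choose l) * (rr p \<tau> \<omega>)^l * (1 - rr p \<tau> \<omega>)^(n-l) * (if B \<le> l then 1 else 0))" for \<omega>
  proof -
    have "(\<Sum>s\<in>signal_profiles n. sig_prob p n \<omega> s * (\<Sum>a\<in>action_profiles n. act_prob n \<sigma> s a *
      (if funded B n a then 1 else 0)))
      = (\<Sum>S\<in>Pow {1..n}. (\<Prod>j\<in>{1..n}. if j \<in> S then rr p \<tau> \<omega> else 1 - rr p \<tau> \<omega>) * (if B \<le> card S then 1 else 0))"
      unfolding pow_form
    proof (intro sum.cong refl)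
      fix S assume "S \<in> Pow {1..n}"
      hence S: "S \<subseteq> {1..n}" by simp
      show "(if funded B n (restrict (\<lambda>j. j \<in> S) {1..n}) then 1 else 0) *
          (\<Prod>j\<in>{1..n}. if j \<in> S then rr p (\<sigma> j) \<omega> else 1 - rr p (\<sigma> j) \<omega>) =
          (\<Prod>j\<in>{1..n}. if j \<in> S then rr p \<tau> \<omega> else 1 - rr p \<tau> \<omega>) * (if B \<le> card S then 1 else 0)"
      proof -
        have "(\<Prod>j\<in>{1..n}. if j \<in> S then rr p (\<sigma> j) \<omega> else 1 - rr p (\<sigma> j) \<omega>) =
          (\<Prod>j\<in>{1..n}. if j \<in> S then rr p \<tau> \<omega> else 1 - rr p \<tau> \<omega>)"
          using sym by (intro prod.cong) auto
        thus ?thesis unfolding funded_def card_restrict[OF S] by (simp add: mult.commute)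
      qed
    qed
    also have "\<dots> = (\<Sum>l\<le>n. real (n choose l) * (rr p \<tau> \<omega>)^l * (1 - rr p \<tau> \<omega>)^(n-l) * (if B \<le> l then 1 else 0))"
      using card_pow_sum[of "{1..n}" "rr p \<tau> \<omega>" "\<lambda>l. if B \<le> l then 1 else 0"] by simp
    finally show ?thesis .
  qed
  show ?thesis unfolding success_prob_def sum_HL inner by simp
qed

definition cH :: "real \<Rightarrow> nat \<Rightarrow> nat \<Rightarrow> (st \<Rightarrow> real) \<Rightarrow> real" where
  "cH p B n \<tau> = p * Pst B (n-1) (rr p \<tau> H) - (1-p) * Pst B (n-1) (rr p \<tau> L)"
definition cL :: "real \<Rightarrow> nat \<Rightarrow> nat \<Rightarrow> (st \<Rightarrow> real) \<Rightarrow> real" where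
  "cL p B n \<tau> = (1-p) * Pst B (n-1) (rr p \<tau> H) - p * Pst B (n-1) (rr p \<tau> L)"

lemma EU_sym:
  assumes i: "i \<in> {1..n}" and oth: "\<forall>j\<in>{1..n}. j \<noteq> i \<longrightarrow> \<sigma> j = \<tau>"
  shows "expected_utility p B n \<sigma> i = 1/2 * (\<sigma> i H * cH p B n \<tau> + \<sigma> i L * cL p B n \<tau>)"
  unfolding EU_formula[OF assms] cH_def cL_def rr_H[of p "\<sigma> i"] rr_L[of p "\<sigma> i"]
  by (simp add: algebra_simps)

lemma sign_lemma:
  fixes a b x y :: real
  assumes r: "0 \<le> a" "a \<le> 1" "0 \<le> b" "b \<le> 1"
    and i1: "x + y \<le> a*x + b*y" and i2: "x \<le> a*x + b*y" and i3: "y \<le> a*x + b*y" and i4: "0 \<le> a*x + b*y"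
  shows "(x > 0 \<longrightarrow> a = 1) \<and> (x < 0 \<longrightarrow> a = 0) \<and> (y > 0 \<longrightarrow> b = 1) \<and> (y < 0 \<longrightarrow> b = 0)"
proof -
  have A: "a = 1" if xp: "x > 0" and i1: "x + y \<le> a*x + b*y" and i2: "x \<le> a*x + b*y"
      and "0 \<le> a" "a \<le> 1" "0 \<le> b" "b \<le> 1" for a b x y :: real
  proof (rule ccontr)
    assume "a \<noteq> 1" hence "a < 1" using that by simp
    hence ax: "a*x < x" using xp by simp
    show False
    proof (cases "y \<ge> 0")
      case True
      hence "b*y \<le> y" using that by (simp add: mult_left_le_one_le)
      thus False using ax i1 by simp
    next
      case False
      hence "b*y \<le> 0" using that by (simp add: mult_nonneg_nonpos)
      thus False using ax i2 by simp
    qed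
  qed
  have Z: "a = 0" if xn: "x < 0" and i3: "y \<le> a*x + b*y" and i4: "0 \<le> a*x + b*y"
      and "0 \<le> a" "a \<le> 1" "0 \<le> b" "b \<le> 1" for a b x y :: real
  proof (rule ccontr)
    assume "a \<noteq> 0" hence "a > 0" using that by simp
    hence ax: "a*x < 0" using xn by (simp add: mult_pos_neg)
    show False
    proof (cases "y \<ge> 0")
      case True
      hence "b*y \<le> y" using that by (simp add: mult_left_le_one_le)
      thus False using ax i3 by simp
    next
      case False
      hence "b*y \<le> 0" using that by (simp add: mult_nonneg_nonpos)
      thus False using ax i4 by simp
    qed
  qed
  show ?thesis
    using A[of x y a b] Z[of x y a b] A[of y x b a] Z[of y x b a] r i1 i2 i3 i4
    by (simp add: algebra_simps)
qed

lemma pure_H: "pure_strategy f H = (if f H then 1 else 0)" by (simp add: pure_strategy_def)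
lemma pure_L: "pure_strategy f L = (if f L then 1 else 0)" by (simp add: pure_strategy_def)

lemma bne_suff:
  assumes sym: "\<forall>j\<in>{1..n}. \<sigma> j = \<tau>"
    and r: "0 \<le> \<tau> H" "\<tau> H \<le> 1" "0 \<le> \<tau> L" "\<tau> L \<le> 1"
    and sH: "cH p B n \<tau> > 0 \<longrightarrow> \<tau> H = 1" "cH p B n \<tau> < 0 \<longrightarrow> \<tau> H = 0"
    and sL: "cL p B n \<tau> > 0 \<longrightarrow> \<tau> L = 1" "cL p B n \<tau> < 0 \<longrightarrow> \<tau> L = 0"
  shows "bayes_nash_eq p B n \<sigma>"
  unfolding bayes_nash_eq_def
proof (intro conjI ballI allI)
  show "strategy_profile n \<sigma>"
    unfolding strategy_profile_def
  proof (intro ballI allI)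
    fix i s assume "i \<in> {1..n}"
    thus "0 \<le> \<sigma> i s \<and> \<sigma> i s \<le> 1" using sym r by (cases s) auto
  qed
next
  fix i f assume i: "i \<in> {1..n}"
  define x where "x = cH p B n \<tau>"
  define y where "y = cL p B n \<tau>"
  have e1: "expected_utility p B n (\<sigma>(i := pure_strategy f)) i =
     1/2 * (pure_strategy f H * x + pure_strategy f L * y)"
    unfolding x_def y_def using sym i by (subst EU_sym[OF i, of _ \<tau>]) auto
  have e2: "expected_utility p B n \<sigma> i = 1/2 * (\<tau> H * x + \<tau> L * y)"
    unfolding x_def y_def using sym i by (subst EU_sym[OF i, of _ \<tau>]) auto
  have h: "pure_strategy f H * x \<le> \<tau> H * x"
  proof (cases "x > 0")
    case True thus ?thesis using sH unfolding x_def pure_H by auto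
  next
    case False
    show ?thesis
    proof (cases "x < 0")
      case True thus ?thesis using sH unfolding x_def pure_H by auto
    next
      case False thus ?thesis using \<open>\<not> x > 0\<close> by simp
    qed
  qed
  have l: "pure_strategy f L * y \<le> \<tau> L * y"
  proof (cases "y > 0")
    case True thus ?thesis using sL unfolding y_def pure_L by auto
  next
    case False
    show ?thesis
    proof (cases "y < 0")
      case True thus ?thesis using sL unfolding y_def pure_L by auto
    next
      case False thus ?thesis using \<open>\<not> y > 0\<close> by simp
    qed
  qed
  show "expected_utility p B n (\<sigma>(i := pure_strategy f)) i \<le> expected_utility p B n \<sigma> i"
    unfolding e1 e2 using h l by simp
qed

lemma bne_nec:
  assumes bne: "bayes_nash_eq p B n \<sigma>" and n: "1 \<le> n" and sym: "\<forall>j\<in>{1..n}. \<sigma> j = \<tau>"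
  shows "0 \<le> \<tau> H \<and> \<tau> H \<le> 1 \<and> 0 \<le> \<tau> L \<and> \<tau> L \<le> 1 \<and>
    (cH p B n \<tau> > 0 \<longrightarrow> \<tau> H = 1) \<and> (cH p B n \<tau> < 0 \<longrightarrow> \<tau> H = 0) \<and>
    (cL p B n \<tau> > 0 \<longrightarrow> \<tau> L = 1) \<and> (cL p B n \<tau> < 0 \<longrightarrow> \<tau> L = 0)"
proof -
  have one: "1 \<in> {1..n}" using n by simp
  have s1: "\<sigma> 1 = \<tau>" using sym one by blast
  have r: "0 \<le> \<tau> H" "\<tau> H \<le> 1" "0 \<le> \<tau> L" "\<tau> L \<le> 1"
    using bne one s1 unfolding bayes_nash_eq_def strategy_profile_def by auto
  define x where "x = cH p B n \<tau>"
  define y where "y = cL p B n \<tau>"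
  have e2: "expected_utility p B n \<sigma> 1 = 1/2 * (\<tau> H * x + \<tau> L * y)"
    unfolding x_def y_def using sym s1 by (subst EU_sym[OF one, of _ \<tau>]) auto
  have dev: "pure_strategy f H * x + pure_strategy f L * y \<le> \<tau> H * x + \<tau> L * y" for f
  proof -
    have "expected_utility p B n (\<sigma>(1 := pure_strategy f)) 1 =
       1/2 * (pure_strategy f H * x + pure_strategy f L * y)"
      unfolding x_def y_def using sym by (subst EU_sym[OF one, of _ \<tau>]) auto
    moreover have "expected_utility p B n (\<sigma>(1 := pure_strategy f)) 1 \<le> expected_utility p B n \<sigma> 1"
      using bne one unfolding bayes_nash_eq_def by blast
    ultimately show ?thesis unfolding e2 by simp
  qed
  have "x + y \<le> \<tau> H * x + \<tau> L * y" using dev[of "\<lambda>_. True"] by (simp add: pure_H pure_L)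
  moreover have "x \<le> \<tau> H * x + \<tau> L * y" using dev[of "\<lambda>s. s = H"] by (simp add: pure_H pure_L)
  moreover have "y \<le> \<tau> H * x + \<tau> L * y" using dev[of "\<lambda>s. s = L"] by (simp add: pure_H pure_L)
  moreover have "0 \<le> \<tau> H * x + \<tau> L * y" using dev[of "\<lambda>_. False"] by (simp add: pure_H pure_L)
  ultimately show ?thesis using sign_lemma[OF r] r unfolding x_def y_def by blast
qed

lemma sum_pos_q:
  assumes "0 < q" "q \<le> 1" "1 \<le> B" "B \<le> n"
  shows "0 < (\<Sum>l\<le>n. real (n choose l) * q^l * (1 - q)^(n-l) * (if B \<le> l then 1 else 0))"
proof -
  have "(\<lambda>l. real (n choose l) * q^l * (1 - q)^(n-l) * (if B \<le> l then 1 else 0)) n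
     \<le> (\<Sum>l\<le>n. real (n choose l) * q^l * (1 - q)^(n-l) * (if B \<le> l then 1 else 0))"
    using assms by (intro member_le_sum) auto
  moreover have "0 < (\<lambda>l. real (n choose l) * q^l * (1 - q)^(n-l) * (if B \<le> l then 1 else 0)) n"
    using assms by simp
  ultimately show ?thesis by linarith
qed

lemma sum_nonneg_q:
  assumes "0 \<le> q" "q \<le> 1"
  shows "0 \<le> (\<Sum>l\<le>n. real (n choose l) * q^l * (1 - q)^(n-l) * (if B \<le> l then 1 else 0))"
  using assms by (intro sum_nonneg) auto

lemma sum_zero_q:
  assumes "1 \<le> B"
  shows "(\<Sum>l\<le>n. real (n choose l) * (0::real)^l * (1 - 0)^(n-l) * (if B \<le> l then 1 else 0)) = 0"
  using assms by (intro sum.neutral) auto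

lemma helpP:
  fixes A C p :: real
  assumes "0 < C" "C \<le> A" "1/2 < p" "p < 1"
  shows "0 < p*A - (1-p)*C"
proof -
  have "p*C \<le> p*A" using assms by (intro mult_left_mono) auto
  moreover have "(1-p)*C < p*C" using assms by (intro mult_strict_right_mono) auto
  ultimately show ?thesis by linarith
qed

lemma helpN:
  fixes A C p :: real
  assumes "0 < C" "A \<le> C" "1/2 < p" "p < 1"
  shows "(1-p)*A - p*C < 0"
proof -
  have "(1-p)*A \<le> (1-p)*C" using assms by (intro mult_left_mono) auto
  moreover have "(1-p)*C < p*C" using assms by (intro mult_strict_right_mono) auto
  ultimately show ?thesis by linarith
qed

lemma pos_comb:
  fixes u v a b :: real
  assumes "0 < u" "0 < v" "0 \<le> a" "0 \<le> b" "\<not> (a = 0 \<and> b = 0)"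
  shows "0 < u*a + v*b"
proof (cases "a = 0")
  case True
  hence "0 < b" using assms by simp
  thus ?thesis using True assms by simp
next
  case False
  hence "0 < a" using assms by simp
  hence "0 < u*a" using assms by simp
  moreover have "0 \<le> v*b" using assms by simp
  ultimately show ?thesis by linarith
qed

lemma comb_le1:
  fixes p a b :: real
  assumes "0 \<le> p" "p \<le> 1" "0 \<le> a" "a \<le> 1" "0 \<le> b" "b \<le> 1"
  shows "p*a + (1-p)*b \<le> 1"
  using mult_right_le_one_le[of p a] mult_right_le_one_le[of "1-p" b] assms by linarith

lemma comb_mono:
  fixes p a b :: real
  assumes "b \<le> a" "1/2 < p"
  shows "(1-p)*a + p*b \<le> p*a + (1-p)*b"
proof -
  have "0 \<le> (2*p-1)*(a-b)" using assms by simp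
  thus ?thesis by (simp add: algebra_simps)
qed

theorem theorem1:
  fixes n B :: nat and p :: real
  assumes "1 \<le> n" and "1 \<le> B" and "B \<le> n" and "1/2 < p" and "p < 1"
  shows "\<exists>lam::real. 0 \<le> lam \<and> lam < 1 \<and>
    (let \<sigma> = (\<lambda>(_::nat) s. if s = H then 1 else lam) in
       bayes_nash_eq p B n \<sigma> \<and> symmetric_profile n \<sigma> \<and> nontrivial p B n \<sigma>) \<and>
    (\<forall>\<sigma>. bayes_nash_eq p B n \<sigma> \<and> symmetric_profile n \<sigma> \<and> nontrivial p B n \<sigma> \<longrightarrow>
       (\<forall>i\<in>{1..n}. \<sigma> i H = 1 \<and> \<sigma> i L = lam))"
proof -
  obtain m where n: "n = Suc m" using assms(1) by (cases n) auto
  define j0 where "j0 = n - B"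
  have j0m: "j0 \<le> m" using assms n by (simp add: j0_def)
  define GG where "GG = Gf m j0"
  have PG: "\<And>q. Pst B (n-1) q = GG (1-q)"
    using Pst_Gf[of B m] assms n by (simp add: GG_def j0_def)
  have GGpos: "\<And>x. 0 \<le> x \<Longrightarrow> x < 1 \<Longrightarrow> 0 < GG x" unfolding GG_def by (rule Gf_pos)
  have GGmono: "\<And>x y. 0 \<le> x \<Longrightarrow> x \<le> y \<Longrightarrow> y \<le> 1 \<Longrightarrow> GG y \<le> GG x"
    unfolding GG_def using j0m by (intro Gf_mono) auto
  have GG0: "GG 0 = 1" unfolding GG_def by (rule Gf_zero)
  have p0: "0 < 1 - p" "0 < p" using assms by auto
  define g where "g = (\<lambda>l. (1-p) * GG ((1-p)*(1-l)) - p * GG (p*(1-l)))"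
  have cL_prof: "\<And>l. cL p B n (\<lambda>s. if s = H then 1 else l) = g l"
    unfolding cL_def PG rr_H rr_L g_def by (simp add: algebra_simps)
  have cH_prof: "\<And>l. cH p B n (\<lambda>s. if s = H then 1 else l) = p * GG ((1-p)*(1-l)) - (1-p) * GG (p*(1-l))"
    unfolding cH_def PG rr_H rr_L by (simp add: algebra_simps)
  have cH_pos: "\<And>l. 0 \<le> l \<Longrightarrow> l < 1 \<Longrightarrow> 0 < p * GG ((1-p)*(1-l)) - (1-p) * GG (p*(1-l))"
  proof -
    fix l :: real assume l: "0 \<le> l" "l < 1"
    have pl: "p*(1-l) < 1" using mult_right_le_one_le[of p "1-l"] l assms by linarith
    have B0: "0 < GG (p*(1-l))" using l p0 pl by (intro GGpos) auto
    have "GG (p*(1-l)) \<le> GG ((1-p)*(1-l))"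
      using l assms pl by (intro GGmono) (auto intro: mult_right_mono)
    thus "0 < p * GG ((1-p)*(1-l)) - (1-p) * GG (p*(1-l))"
      using B0 assms by (intro helpP) auto
  qed
  define Cond where "Cond = (\<lambda>l. 0 \<le> l \<and> l < 1 \<and> g l \<le> 0 \<and> (0 < l \<longrightarrow> g l = 0))"
  have key: "False" if l12: "l1 < l2" and c1: "Cond l1" and c2: "Cond l2" for l1 l2
  proof -
    have l: "0 \<le> l1" "l2 < 1" "0 < l2" using c1 c2 l12 unfolding Cond_def by auto
    have g2: "g l2 = 0" and g1: "g l1 \<le> 0" using c1 c2 l unfolding Cond_def by auto
    show False
    proof (cases "j0 = m")
      case True
      hence "GG x = 1" for x unfolding GG_def by (simp add: Gf_full)
      thus False using g2 assms unfolding g_def by simp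
    next
      case False
      then obtain M where mM: "m = Suc M" and jM: "j0 \<le> M" using j0m by (cases m) auto
      have pl: "p*(1-l) < 1" if "0 \<le> l" "l < 1" for l
        using mult_right_le_one_le[of p "1-l"] assms that by linarith
      have B1: "0 < GG (p*(1-l1))" using l l12 p0 pl[of l1] by (intro GGpos) auto
      have B2: "0 < GG (p*(1-l2))" using l p0 pl[of l2] by (intro GGpos) auto
      have "GG ((1-p)*(1-l2)) / GG (p*(1-l2)) < GG ((1-p)*(1-l1)) / GG (p*(1-l1))"
        unfolding GG_def mM using ratio_mono[OF jM, of "1-p" p "1-l2" "1-l1"] l l12 assms by auto
      hence lt: "GG ((1-p)*(1-l2)) * GG (p*(1-l1)) < GG ((1-p)*(1-l1)) * GG (p*(1-l2))"
        using B1 B2 by (simp add: divide_less_eq field_simps)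
      define A1 where "A1 = GG ((1-p)*(1-l1))"
      define A2 where "A2 = GG ((1-p)*(1-l2))"
      define C1 where "C1 = GG (p*(1-l1))"
      define C2 where "C2 = GG (p*(1-l2))"
      have lt': "A2 * C1 < A1 * C2" using lt unfolding A1_def A2_def C1_def C2_def .
      have eq: "(1-p) * A2 = p * C2" using g2 unfolding g_def A2_def C2_def by simp
      have "(1-p) * (A2 * C1) < (1-p) * (A1 * C2)" using lt' p0 by simp
      moreover have "(1-p) * (A2 * C1) = (p * C1) * C2"
      proof -
        have "(1-p) * (A2 * C1) = ((1-p) * A2) * C1" by (simp only: mult.assoc)
        also have "\<dots> = (p * C2) * C1" by (simp only: eq)
        finally show ?thesis by (simp add: mult_ac)
      qed
      moreover have "(1-p) * (A1 * C2) = ((1-p) * A1) * C2" by (simp only: mult.assoc)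
      ultimately have "(p * C1) * C2 < ((1-p) * A1) * C2" by simp
      hence "p * C1 < (1-p) * A1" using B2 unfolding C2_def by (simp add: mult_less_cancel_right)
      hence "p * GG (p*(1-l1)) < (1-p) * GG ((1-p)*(1-l1))" unfolding A1_def C1_def .
      thus False using g1 unfolding g_def by simp
    qed
  qed
  have uniq: "l1 = l2" if "Cond l1" "Cond l2" for l1 l2
    using key[of l1 l2] key[of l2 l1] that by (cases l1 l2 rule: linorder_cases) auto
  have "\<exists>lam. Cond lam"
  proof (cases "g 0 \<le> 0")
    case True thus ?thesis unfolding Cond_def by (intro exI[of _ 0]) auto
  next
    case False
    have g1: "g 1 < 0" using assms by (simp add: g_def GG0)
    have cont: "continuous_on {0..1} g"
      unfolding g_def GG_def Gf_def by (intro continuous_intros)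
    obtain l where l: "0 \<le> l" "l \<le> 1" "g l = 0" using IVT2'[of g 1 0 0, OF _ _ _ cont] g1 False by auto
    have "l \<noteq> 1" using g1 l by auto
    thus ?thesis using l unfolding Cond_def by (intro exI[of _ l]) auto
  qed
  then obtain lam where lam: "Cond lam" by blast
  hence lam01: "0 \<le> lam" "lam < 1" unfolding Cond_def by auto
  define \<tau> where "\<tau> = (\<lambda>s. if s = H then 1 else lam)"
  have part1: "bayes_nash_eq p B n (\<lambda>(_::nat). \<tau>) \<and> symmetric_profile n (\<lambda>(_::nat). \<tau>) \<and> nontrivial p B n (\<lambda>(_::nat). \<tau>)"
  proof (intro conjI)
    show "bayes_nash_eq p B n (\<lambda>_. \<tau>)"
    proof (rule bne_suff[of n _ \<tau>])
      show "cH p B n \<tau> < 0 \<longrightarrow> \<tau> H = 0"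
        unfolding \<tau>_def cH_prof using cH_pos[OF lam01] by simp
      show "cL p B n \<tau> > 0 \<longrightarrow> \<tau> L = 1"
        unfolding \<tau>_def cL_prof using lam unfolding Cond_def by simp
      show "cL p B n \<tau> < 0 \<longrightarrow> \<tau> L = 0"
        unfolding \<tau>_def cL_prof using lam unfolding Cond_def by auto
    qed (use lam01 in \<open>auto simp: \<tau>_def\<close>)
    show "symmetric_profile n (\<lambda>_. \<tau>)" by (simp add: symmetric_profile_def)
    have qH: "0 < rr p \<tau> H" "rr p \<tau> H \<le> 1" unfolding rr_H \<tau>_def
      using pos_comb[of p "1-p" 1 lam] comb_le1[of p 1 lam] lam01 assms by auto
    have qL: "0 \<le> rr p \<tau> L" "rr p \<tau> L \<le> 1" unfolding rr_L \<tau>_def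
      using pos_comb[of "1-p" p 1 lam] comb_le1[of "1-p" 1 lam] lam01 assms by auto
    show "nontrivial p B n (\<lambda>_. \<tau>)"
      unfolding nontrivial_def
      using success_formula[of n "\<lambda>_. \<tau>" \<tau> p B] sum_pos_q[OF qH assms(2,3)] sum_nonneg_q[OF qL, of n B] by simp
  qed
  have part2: "\<forall>i\<in>{1..n}. \<sigma> i H = 1 \<and> \<sigma> i L = lam"
    if bne: "bayes_nash_eq p B n \<sigma>" and sy: "symmetric_profile n \<sigma>" and nt: "nontrivial p B n \<sigma>" for \<sigma>
  proof -
    define t where "t = \<sigma> 1"
    have one: "1 \<in> {1..n}" using assms(1) by simp
    have sym: "\<forall>j\<in>{1..n}. \<sigma> j = t"
    proof
      fix j assume "j \<in> {1..n}"
      thus "\<sigma> j = t" using sy one unfolding symmetric_profile_def t_def by blast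
    qed
    note N = bne_nec[OF bne assms(1) sym]
    define a where "a = t H"
    define b where "b = t L"
    have r: "0 \<le> a" "a \<le> 1" "0 \<le> b" "b \<le> 1" using N by (auto simp: a_def b_def)
    have nz: "\<not> (a = 0 \<and> b = 0)"
    proof
      assume "a = 0 \<and> b = 0"
      hence "rr p t H = 0" "rr p t L = 0" by (auto simp: rr_H rr_L a_def b_def)
      hence "success_prob p B n \<sigma> = 0"
        unfolding success_formula[OF sym] using sum_zero_q[OF assms(2)] by simp
      thus False using nt unfolding nontrivial_def by simp
    qed
    have qHp: "0 < p*a + (1-p)*b" using r nz p0 by (intro pos_comb) auto
    have qLp: "0 < (1-p)*a + p*b" using r nz p0 by (intro pos_comb) auto
    have qH1: "p*a + (1-p)*b \<le> 1" using r p0 by (intro comb_le1) auto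
    have qL1: "(1-p)*a + p*b \<le> 1" using r p0 comb_le1[of "1-p" a b] by auto
    define xH where "xH = 1 - (p*a + (1-p)*b)"
    define xL where "xL = 1 - ((1-p)*a + p*b)"
    have x01: "0 \<le> xH" "xH < 1" "0 \<le> xL" "xL < 1" using qHp qLp qH1 qL1 by (auto simp: xH_def xL_def)
    have cHt: "cH p B n t = p * GG xH - (1-p) * GG xL"
      unfolding cH_def PG rr_H rr_L xH_def xL_def a_def b_def ..
    have cLt: "cL p B n t = (1-p) * GG xH - p * GG xL"
      unfolding cL_def PG rr_H rr_L xH_def xL_def a_def b_def ..
    have GL: "0 < GG xL" "0 < GG xH" using x01 GGpos by auto
    have a1: "a = 1 \<and> b < 1"
    proof (cases "b \<le> a")
      case True
      have "xH \<le> xL" unfolding xH_def xL_def using comb_mono[OF True assms(4)] by linarith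
      hence "GG xL \<le> GG xH" using x01 by (intro GGmono) auto
      hence "0 < cH p B n t" unfolding cHt using GL assms by (intro helpP) auto
      hence A: "a = 1" using N a_def by auto
      have "b \<noteq> 1"
      proof
        assume "b = 1"
        hence "xH = 0" "xL = 0" using A by (auto simp: xH_def xL_def algebra_simps)
        hence "cL p B n t < 0" using assms by (simp add: cLt GG0)
        hence "b = 0" using N b_def by auto
        thus False using \<open>b = 1\<close> by simp
      qed
      thus ?thesis using A r by simp
    next
      case False
      have "xL \<le> xH" unfolding xH_def xL_def using comb_mono[of a b p] False assms(4)
        by (simp add: algebra_simps)
      hence "GG xH \<le> GG xL" using x01 by (intro GGmono) auto
      hence "cL p B n t < 0" unfolding cLt using GL assms by (intro helpN) auto
      hence "b = 0" using N b_def by auto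
      thus ?thesis using False r by simp
    qed
    have tform: "t = (\<lambda>s. if s = H then 1 else b)"
    proof
      fix s show "t s = (if s = H then 1 else b)" using a1 by (cases s) (auto simp: a_def b_def)
    qed
    have "Cond b"
    proof -
      have "cL p B n t = g b" unfolding tform cL_prof ..
      moreover note N' = N[unfolded b_def[symmetric]]
      ultimately show ?thesis using r a1 unfolding Cond_def by auto
    qed
    hence "b = lam" using uniq lam by blast
    thus ?thesis using sym a1 by (auto simp: a_def b_def)
  qed
  show ?thesis
    using lam01 part1 part2 unfolding \<tau>_def Let_def by (intro exI[of _ lam]) blast
qed

end
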